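(* Let $\alpha,\beta,p,q>0$ with $\beta p>1$ (equivalently, the generalized Beta-prime distribution $GBP(\alpha,\beta,p,q)$ has finite mean $\mu$) and $\alpha+\beta\neq 1$. Let $F$ be the CDF of $GBP(\alpha,\beta,p,q)$, let $y>0$, and set $w=\frac{y^p}{q^p+y^p}$. Then $$ \begin{aligned} \mathrm{CRPS}(F\mid y) = {}&2\mu - y +\frac{2}{B(\alpha, \beta)}\left(y\,B(w;\alpha,\beta)+\frac{y}{\alpha+\beta-1}\, w^{\alpha-1}(1-w)^\beta\left(1-{}_2F_1\!\left(1,\alpha+\beta-1;\alpha+\tfrac1p;w\right)\right) \right)\\ &-\frac{2q}{\alpha B(\alpha,\beta)^2}\,B\!\left(2\alpha+\tfrac1p,\,2\beta-\tfrac1p\right)\, {}_3F_2\!\left(\alpha+\beta,\, 1,\, 2\alpha+\tfrac1p;\;\alpha+1,\,2\alpha+2\beta;\;1\right). \end{aligned} $$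
   Context: The generalized Beta-prime distribution $GBP(\alpha,\beta,p,q)$ with parameters $\alpha,\beta,p,q>0$ is the distribution on $(0,\infty)$ with density $p_Z(z)=\frac{p}{qB(\alpha,\beta)}\frac{(z/q)^{\alpha p-1}}{(1+(z/q)^p)^{\alpha+\beta}}$ for $z>0$. Its mean is $\mu=q\,\frac{B(\alpha+1/p,\beta-1/p)}{B(\alpha,\beta)}$ when $\beta p>1$. For a CDF $F$ on $\mathbb R$ and an observation $y\in\mathbb R$, the Continuous Ranked Probability Score is $\mathrm{CRPS}(F\mid y)=\int_{\mathbb R}(F(x)-H(x-y))^2\,dx$, where $H$ is the Heaviside step function ($H(t)=1$ for $t\ge0$, $0$ otherwise). $B(\alpha,\beta)$ is the Beta function, $B(x;\alpha,\beta)=\int_0^x t^{\alpha-1}(1-t)^{\beta-1}dt$ is the (non-regularized) incomplete Beta function, and ${}_2F_1$, ${}_3F_2$ denote the generalized hypergeometric functions. *)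

theory Defs
  imports "HOL-Analysis.Analysis"
begin

definition gbp_density :: "real \<Rightarrow> real \<Rightarrow> real \<Rightarrow> real \<Rightarrow> real \<Rightarrow> real" where
  "gbp_density \<alpha> \<beta> p q z =
     (if z > 0 then p / (q * Beta \<alpha> \<beta>) * (z / q) powr (\<alpha> * p - 1)
                    / (1 + (z / q) powr p) powr (\<alpha> + \<beta>)
      else 0)"

definition gbp_cdf :: "real \<Rightarrow> real \<Rightarrow> real \<Rightarrow> real \<Rightarrow> real \<Rightarrow> real" where
  "gbp_cdf \<alpha> \<beta> p q x = (LBINT z:{..x}. gbp_density \<alpha> \<beta> p q z)"

text \<open>Its mean (formula valid when beta * p > 1).\<close>
definition gbp_mean :: "real \<Rightarrow> real \<Rightarrow> real \<Rightarrow> real \<Rightarrow> real" where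
  "gbp_mean \<alpha> \<beta> p q = q * Beta (\<alpha> + 1 / p) (\<beta> - 1 / p) / Beta \<alpha> \<beta>"

definition heaviside :: "real \<Rightarrow> real" where
  "heaviside t = (if t \<ge> 0 then 1 else 0)"

definition CRPS :: "(real \<Rightarrow> real) \<Rightarrow> real \<Rightarrow> real" where
  "CRPS F y = (LINT x|lborel. (F x - heaviside (x - y))\<^sup>2)"

definition inc_Beta :: "real \<Rightarrow> real \<Rightarrow> real \<Rightarrow> real" where
  "inc_Beta x a b = (LBINT t:{0..x}. t powr (a - 1) * (1 - t) powr (b - 1))"

definition hyp2F1 :: "real \<Rightarrow> real \<Rightarrow> real \<Rightarrow> real \<Rightarrow> real" where
  "hyp2F1 a b c z = (\<Sum>n. pochhammer a n * pochhammer b n / (pochhammer c n * fact n) * z ^ n)"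

definition hyp3F2 :: "real \<Rightarrow> real \<Rightarrow> real \<Rightarrow> real \<Rightarrow> real \<Rightarrow> real \<Rightarrow> real" where
  "hyp3F2 a1 a2 a3 b1 b2 z =
     (\<Sum>n. pochhammer a1 n * pochhammer a2 n * pochhammer a3 n
            / (pochhammer b1 n * pochhammer b2 n * fact n) * z ^ n)"

end

theory Submission
  imports Defs "HOL-Real_Asymp.Real_Asymp"
begin

lemma ratio_summable:
  fixes c :: "nat \<Rightarrow> real"
  assumes pos: "\<And>n. c n > 0" and lim: "(\<lambda>n. c (Suc n) / c n) \<longlonglongrightarrow> 1" and t: "\<bar>t\<bar> < 1"
  shows "summable (\<lambda>n. c n * t ^ n)"
proof -
  define r where "r = (1 + \<bar>t\<bar>) / 2"
  define d where "d = (1 - \<bar>t\<bar>) / 2"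
  have "d > 0" using t by (simp add: d_def)
  have "eventually (\<lambda>n. c (Suc n) / c n < 1 + d) sequentially"
    using lim \<open>d > 0\<close> by (intro order_tendstoD) auto
  then obtain N where N: "\<And>n. n \<ge> N \<Longrightarrow> c (Suc n) / c n < 1 + d"
    by (auto simp: eventually_sequentially)
  show ?thesis
  proof (rule summable_ratio_test[of r N])
    show "r < 1" using t by (simp add: r_def)
    fix n assume "n \<ge> N"
    from N[OF this] pos[of n] have "c (Suc n) \<le> (1 + d) * c n"
      by (simp add: field_simps)
    hence "c (Suc n) * \<bar>t\<bar> \<le> (1 + d) * \<bar>t\<bar> * c n"
      by (metis abs_ge_zero mult.commute mult.left_commute mult_left_mono)
    also have "(1 + d) * \<bar>t\<bar> \<le> r"
    proof -
      have "0 \<le> (1 - \<bar>t\<bar>)^2" by simp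
      hence "0 \<le> 1 - 2 * \<bar>t\<bar> + \<bar>t\<bar> * \<bar>t\<bar>" by (simp add: power2_eq_square algebra_simps)
      thus ?thesis by (simp add: r_def d_def field_simps)
    qed
    hence "(1 + d) * \<bar>t\<bar> * c n \<le> r * c n" using pos[of n] by (intro mult_right_mono) auto
    finally have *: "c (Suc n) * \<bar>t\<bar> \<le> r * c n" .
    have "norm (c (Suc n) * t ^ Suc n) = (c (Suc n) * \<bar>t\<bar>) * \<bar>t\<bar> ^ n"
      using pos[of "Suc n"] by (simp add: abs_mult power_abs)
    also have "\<dots> \<le> (r * c n) * \<bar>t\<bar> ^ n" by (intro mult_right_mono *) auto
    also have "\<dots> = r * norm (c n * t ^ n)"
      using pos[of n] by (simp add: abs_mult power_abs)
    finally show "norm (c (Suc n) * t ^ Suc n) \<le> r * norm (c n * t ^ n)" .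
  qed
qed

definition sc :: "real \<Rightarrow> real \<Rightarrow> nat \<Rightarrow> real" where
  "sc a b n = pochhammer (a + b) n / pochhammer a (Suc n)"

lemma sc_pos: "a > 0 \<Longrightarrow> b > 0 \<Longrightarrow> sc a b n > 0"
  unfolding sc_def by (intro divide_pos_pos pochhammer_pos) auto

lemma sc_rec: "a > 0 \<Longrightarrow> b > 0 \<Longrightarrow> (a + real n + 1) * sc a b (Suc n) = (a + b + real n) * sc a b n"
proof -
  assume a: "a > 0" and b: "b > 0"
  have 1: "pochhammer a (Suc (Suc n)) = (a + real n + 1) * pochhammer a (Suc n)"
    by (subst pochhammer_rec') (simp add: add_ac)
  have 2: "pochhammer (a + b) (Suc n) = (a + b + real n) * pochhammer (a + b) n"
    by (subst pochhammer_rec') simp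
  have "a + real n + 1 > 0" using a by simp
  moreover have "pochhammer a (Suc n) > 0" using a by (intro pochhammer_pos)
  ultimately show ?thesis unfolding sc_def 1 2
    by (simp add: divide_simps)
qed

lemma sc_0: "a > 0 \<Longrightarrow> a * sc a b 0 = 1"
  unfolding sc_def by simp

lemma sc_ratio: "a > 0 \<Longrightarrow> b > 0 \<Longrightarrow> (\<lambda>n. sc a b (Suc n) / sc a b n) \<longlonglongrightarrow> 1"
proof -
  assume a: "a > 0" and b: "b > 0"
  have "sc a b (Suc n) / sc a b n = (a + b + real n) / (a + real n + 1)" for n
    using sc_rec[OF a b, of n] sc_pos[OF a b, of n] a
    by (simp add: field_simps)
  moreover have "(\<lambda>n. (a + b + real n) / (a + real n + 1)) \<longlonglongrightarrow> 1"
    by real_asymp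
  ultimately show ?thesis by simp
qed

lemma FTC_nonneg_real:
  fixes F f :: "real \<Rightarrow> real"
  assumes "a < b" "\<And>x. a < x \<Longrightarrow> x < b \<Longrightarrow> (F has_real_derivative f x) (at x)"
   "\<And>x. a < x \<Longrightarrow> x < b \<Longrightarrow> isCont f x" "\<And>x. a < x \<Longrightarrow> x < b \<Longrightarrow> 0 \<le> f x"
   "(F \<longlongrightarrow> A) (at_right a)" "(F \<longlongrightarrow> B) (at_left b)"
  shows "set_integrable lborel {a<..<b} f" "(LBINT x:{a<..<b}. f x) = B - A"
proof -
  have *: "set_integrable lborel (einterval (ereal a) (ereal b)) f \<and>
        (LBINT x=ereal a..ereal b. f x) = B - A"
    by (intro conjI interval_integral_FTC_nonneg[of "ereal a" "ereal b" F f A B])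
       (use assms in \<open>auto simp: ereal_tendsto_simps\<close>)
  then show "set_integrable lborel {a<..<b} f" by simp
  from * show "(LBINT x:{a<..<b}. f x) = B - A"
    using assms(1) by (simp add: interval_lebesgue_integral_def)
qed

lemma FTC_nonneg_real_inf:
  fixes F f :: "real \<Rightarrow> real"
  assumes "\<And>x. a < x \<Longrightarrow> (F has_real_derivative f x) (at x)"
   "\<And>x. a < x \<Longrightarrow> isCont f x" "\<And>x. a < x \<Longrightarrow> 0 \<le> f x"
   "(F \<longlongrightarrow> A) (at_right a)" "(F \<longlongrightarrow> B) at_top"
  shows "set_integrable lborel {a<..} f" "(LBINT x:{a<..}. f x) = B - A"
proof -
  have *: "set_integrable lborel (einterval (ereal a) \<infinity>) f \<and>
        (LBINT x=ereal a..\<infinity>. f x) = B - A"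
    by (intro conjI interval_integral_FTC_nonneg[of "ereal a" "\<infinity>" F f A B])
       (use assms in \<open>auto simp: ereal_tendsto_simps\<close>)
  have e: "einterval (ereal a) \<infinity> = {a<..}" by (auto simp: einterval_iff)
  from * show "set_integrable lborel {a<..} f" by (simp add: e)
  from * show "(LBINT x:{a<..}. f x) = B - A"
    by (simp add: interval_lebesgue_integral_def e)
qed

definition Ss :: "real \<Rightarrow> real \<Rightarrow> real \<Rightarrow> real" where
  "Ss a b t = (\<Sum>n. sc a b n * t ^ n)"

lemma summable_sc: "a > 0 \<Longrightarrow> b > 0 \<Longrightarrow> \<bar>t\<bar> < 1 \<Longrightarrow> summable (\<lambda>n. sc a b n * t ^ n)"
  by (intro ratio_summable sc_pos sc_ratio)

lemma deriv_Ss: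
  assumes "a > 0" "b > 0" "\<bar>t\<bar> < 1"
  shows "(Ss a b has_real_derivative (\<Sum>n. diffs (sc a b) n * t ^ n)) (at t)"
  unfolding Ss_def
  by (rule termdiffs_strong'[of 1]) (use summable_sc[OF assms(1,2)] assms(3) in auto)

lemma Ss_key:
  assumes a: "a > 0" and b: "b > 0" and t: "\<bar>t\<bar> < 1"
  defines "S \<equiv> Ss a b t" and "S' \<equiv> (\<Sum>n. diffs (sc a b) n * t ^ n)"
  shows "a * S + t * S' - t * ((a + b) * S + t * S') = 1"
proof -
  have s1: "(\<lambda>n. sc a b n * t ^ n) sums S"
    unfolding S_def Ss_def using summable_sc[OF a b t] by (simp add: summable_sums)
  have "summable (\<lambda>n. diffs (sc a b) n * t ^ n)"
    by (rule termdiff_converges[of t 1]) (use summable_sc[OF a b] t in auto)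
  hence s2: "(\<lambda>n. diffs (sc a b) n * t ^ n) sums S'"
    unfolding S'_def by (simp add: summable_sums)
  define g where "g m = real m * sc a b m * t ^ m" for m
  have "(\<lambda>n. t * (diffs (sc a b) n * t ^ n)) sums (t * S')"
    by (rule sums_mult[OF s2])
  moreover have "(\<lambda>n. t * (diffs (sc a b) n * t ^ n)) = (\<lambda>n. g (Suc n))"
    by (auto simp: g_def diffs_def fun_eq_iff)
  ultimately have "(\<lambda>n. g (Suc n)) sums (t * S')" by simp
  hence sg: "g sums (t * S')" by (subst (asm) sums_Suc_iff) (simp add: g_def)
  define v where "v n = a * (sc a b n * t ^ n) + g n" for n
  have sv: "v sums (a * S + t * S')"
    unfolding v_def by (intro sums_add sums_mult s1 sg)
  define z where "z n = t * ((a + b) * (sc a b n * t ^ n) + g n)" for n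
  have sz: "z sums (t * ((a + b) * S + t * S'))"
    unfolding z_def by (intro sums_mult sums_add s1 sg)
  have vz: "v (Suc n) = z n" for n
  proof -
    have "v (Suc n) = (a + real n + 1) * sc a b (Suc n) * t ^ Suc n"
      by (simp add: v_def g_def algebra_simps)
    also have "\<dots> = (a + b + real n) * sc a b n * t ^ Suc n"
      by (simp add: sc_rec[OF a b])
    also have "\<dots> = z n" by (simp add: z_def g_def algebra_simps)
    finally show ?thesis .
  qed
  have v0: "v 0 = 1" using sc_0[OF a, of b] by (simp add: v_def g_def)
  have "(\<lambda>n. v (Suc n)) sums (a * S + t * S' - 1)"
    using sv v0 by (subst sums_Suc_iff) simp
  hence "z sums (a * S + t * S' - 1)" by (simp add: vz)
  from sums_unique2[OF this sz] show ?thesis by simp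
qed

definition Gs :: "real \<Rightarrow> real \<Rightarrow> real \<Rightarrow> real" where
  "Gs a b t = t powr a * (1 - t) powr b * Ss a b t"

lemma deriv_Gs:
  assumes a: "a > 0" and b: "b > 0" and t: "0 < t" "t < 1"
  shows "(Gs a b has_real_derivative t powr (a - 1) * (1 - t) powr (b - 1)) (at t)"
proof -
  define S where "S = Ss a b t"
  define S' where "S' = (\<Sum>n. diffs (sc a b) n * t ^ n)"
  have tt: "\<bar>t\<bar> < 1" using t by auto
  have dS: "(Ss a b has_real_derivative S') (at t)" unfolding S'_def by (rule deriv_Ss[OF a b tt])
  have "(Gs a b has_real_derivative
     (a * t powr (a - 1) * (1 - t) powr b + t powr a * (b * (1 - t) powr (b - 1) * (-1))) * S
      + t powr a * (1 - t) powr b * S') (at t)"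
    unfolding Gs_def S_def
    by (rule derivative_eq_intros has_real_derivative_powr DERIV_fun_powr dS refl | use t in simp)+
  moreover have "(a * t powr (a - 1) * (1 - t) powr b + t powr a * (b * (1 - t) powr (b - 1) * (-1))) * S
      + t powr a * (1 - t) powr b * S' = t powr (a - 1) * (1 - t) powr (b - 1)"
  proof -
    define P where "P = t powr (a - 1)"
    define Q where "Q = (1 - t) powr (b - 1)"
    have tp: "t powr a = P * t" unfolding P_def using t by (simp add: powr_diff)
    have tq: "(1 - t) powr b = Q * (1 - t)" unfolding Q_def using t by (simp add: powr_diff)
    have key: "a * S + t * S' - t * ((a + b) * S + t * S') = 1"
      unfolding S_def S'_def by (rule Ss_key[OF a b tt])
    have "(a * P * (Q * (1 - t)) + P * t * (b * Q * (-1))) * S + P * t * (Q * (1 - t)) * S'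
        = P * Q * (a * S + t * S' - t * ((a + b) * S + t * S'))"
      by (simp add: algebra_simps)
    also have "\<dots> = P * Q" by (simp add: key)
    finally show ?thesis by (simp add: tp tq P_def Q_def)
  qed
  ultimately show ?thesis by simp
qed

lemma Gs_0: "a > 0 \<Longrightarrow> Gs a b 0 = 0"
  by (simp add: Gs_def)

lemma Gs_lim0:
  assumes a: "a > 0" and b: "b > 0"
  shows "(Gs a b \<longlongrightarrow> 0) (at_right 0)"
proof -
  have "isCont (Ss a b) 0" using deriv_Ss[OF a b, of 0] by (auto dest: DERIV_isCont)
  hence S: "(Ss a b \<longlongrightarrow> Ss a b 0) (at_right 0)"
    by (simp add: isCont_def filterlim_at_split)
  have P: "((\<lambda>t::real. t powr a) \<longlongrightarrow> 0) (at_right 0)" using a by real_asymp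
  have Q: "((\<lambda>t::real. (1 - t) powr b) \<longlongrightarrow> (1 - 0) powr b) (at_right 0)"
    by (intro tendsto_intros) auto
  have "((\<lambda>t. t powr a * (1 - t) powr b * Ss a b t) \<longlongrightarrow> 0 * ((1 - 0) powr b) * Ss a b 0) (at_right 0)"
    by (intro tendsto_mult P Q S)
  thus ?thesis unfolding Gs_def by simp
qed

lemma isCont_Gs:
  assumes a: "a > 0" and b: "b > 0" and t: "0 < t" "t < 1"
  shows "isCont (Gs a b) t"
  using deriv_Gs[OF assms] by (rule DERIV_isCont)

lemma beta_integrand_isCont:
  "0 < x \<Longrightarrow> x < 1 \<Longrightarrow> isCont (\<lambda>s::real. s powr (a - 1) * (1 - s) powr (b - 1)) x"
  by (intro continuous_intros) auto

lemma inc_Beta_eq_interval: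
  assumes "0 < t"
  shows "inc_Beta t a b = (LBINT s:{0<..<t}. s powr (a - 1) * (1 - s) powr (b - 1))"
proof -
  have "inc_Beta t a b = (LBINT s=ereal 0..ereal t. s powr (a - 1) * (1 - s) powr (b - 1))"
    unfolding inc_Beta_def using assms by (subst interval_integral_Icc) auto
  also have "\<dots> = (LBINT s:{0<..<t}. s powr (a - 1) * (1 - s) powr (b - 1))"
    using assms by (simp add: interval_lebesgue_integral_def)
  finally show ?thesis .
qed

lemma inc_Beta_Gs:
  assumes a: "a > 0" and b: "b > 0" and t: "0 \<le> t" "t < 1"
  shows "inc_Beta t a b = Gs a b t"
proof (cases "t = 0")
  case True
  have "(LBINT s:{0::real}. s powr (a - 1) * (1 - s) powr (b - 1)) = 0"
    unfolding set_lebesgue_integral_def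
    by (rule integral_eq_zero_AE) (use AE_lborel_singleton[of 0] in \<open>auto elim!: eventually_mono\<close>)
  thus ?thesis using True by (simp add: inc_Beta_def Gs_0[OF a])
next
  case False
  hence t0: "0 < t" using t by simp
  have "(LBINT s:{0<..<t}. s powr (a - 1) * (1 - s) powr (b - 1)) = Gs a b t - 0"
  proof (rule FTC_nonneg_real(2))
    show "0 < t" by fact
    show "(Gs a b has_real_derivative x powr (a - 1) * (1 - x) powr (b - 1)) (at x)"
      if "0 < x" "x < t" for x using that t by (intro deriv_Gs a b) auto
    show "isCont (\<lambda>s. s powr (a - 1) * (1 - s) powr (b - 1)) x" if "0 < x" "x < t" for x
      using that t by (intro beta_integrand_isCont) auto
    show "0 \<le> x powr (a - 1) * (1 - x) powr (b - 1)" for x by simp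
    show "(Gs a b \<longlongrightarrow> 0) (at_right 0)" by (rule Gs_lim0[OF a b])
    have "isCont (Gs a b) t" using t0 t by (intro isCont_Gs a b) auto
    thus "(Gs a b \<longlongrightarrow> Gs a b t) (at_left t)"
      by (simp add: isCont_def filterlim_at_split)
  qed
  thus ?thesis using inc_Beta_eq_interval[OF t0] by simp
qed

definition LI :: "(real \<Rightarrow> real) \<Rightarrow> real \<Rightarrow> real" where
  "LI h t = integral {0..t} h"

locale hfun =
  fixes h :: "real \<Rightarrow> real"
  assumes h_int: "h integrable_on {0..1}"
    and h_cont: "\<And>x. 0 < x \<Longrightarrow> x < 1 \<Longrightarrow> isCont h x"
    and h_nonneg: "\<And>x. 0 < x \<Longrightarrow> x < 1 \<Longrightarrow> 0 \<le> h x"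
begin

lemma LI_cont: "continuous_on {0..1} (LI h)"
  unfolding LI_def by (rule indefinite_integral_continuous_1[OF h_int])

lemma LI_0: "LI h 0 = 0"
  unfolding LI_def by simp

lemma LI_deriv:
  assumes "0 < t" "t < 1"
  shows "(LI h has_real_derivative h t) (at t)"
proof -
  have "((\<lambda>u. integral {0..u} h) has_vector_derivative h t) (at t within ({0..1} - {}))"
    by (rule integral_has_vector_derivative_continuous_at[OF h_int])
       (use assms h_cont[OF assms] in \<open>auto intro: continuous_at_imp_continuous_within\<close>)
  hence "((\<lambda>u. integral {0..u} h) has_vector_derivative h t) (at t)"
    using assms by (simp add: at_within_Icc_at)
  thus ?thesis unfolding LI_def by (simp add: has_real_derivative_iff_has_vector_derivative)
qed

end

definition Wf :: "real \<Rightarrow> real \<Rightarrow> real \<Rightarrow> real" where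
  "Wf p q x = x powr p / (q powr p + x powr p)"

definition Wd :: "real \<Rightarrow> real \<Rightarrow> real \<Rightarrow> real" where
  "Wd p q x = p * x powr (p - 1) * q powr p / (q powr p + x powr p)\<^sup>2"

context
  fixes p q :: real
  assumes p: "p > 0" and q: "q > 0"
begin

lemma Wf_0: "Wf p q 0 = 0"
  by (simp add: Wf_def)

lemma Wf_range: "x > 0 \<Longrightarrow> 0 < Wf p q x \<and> Wf p q x < 1"
  using q by (simp add: Wf_def field_simps add_pos_pos)

lemma Wd_pos: "x > 0 \<Longrightarrow> 0 < Wd p q x"
proof -
  assume x: "x > 0"
  have a1: "q powr p > 0" and a2: "x powr p > 0" and a3: "x powr (p - 1) > 0" using q x by auto
  have a4: "q powr p + x powr p > 0" using a1 a2 by linarith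
  show ?thesis using p a1 a3 a4 unfolding Wd_def by (intro divide_pos_pos mult_pos_pos) auto
qed

lemma Wf_deriv: "x > 0 \<Longrightarrow> (Wf p q has_real_derivative Wd p q x) (at x)"
proof -
  assume x: "x > 0"
  have qp: "q powr p > 0" and xp: "x powr p > 0" using q x by auto
  have sp: "q powr p + x powr p \<noteq> 0" using qp xp by linarith
  have "(Wf p q has_real_derivative (p * x powr (p - 1) * 1 * (q powr p + x powr p) -
       x powr p * (0 + p * x powr (p - 1) * 1)) / ((q powr p + x powr p) * (q powr p + x powr p))) (at x)"
    unfolding Wf_def
    by (intro derivative_eq_intros has_real_derivative_powr refl) (use x sp in auto)
  moreover have "(p * x powr (p - 1) * 1 * (q powr p + x powr p) -
       x powr p * (0 + p * x powr (p - 1) * 1)) / ((q powr p + x powr p) * (q powr p + x powr p))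
       = Wd p q x"
    unfolding Wd_def by (simp add: power2_eq_square algebra_simps)
  ultimately show ?thesis by simp
qed

lemma Wd_cont: "x > 0 \<Longrightarrow> isCont (Wd p q) x"
proof -
  assume x: "x > 0"
  have qp: "q powr p > 0" and xp: "x powr p > 0" using q x by auto
  have sp: "q powr p + x powr p \<noteq> 0" using qp xp by linarith
  show ?thesis unfolding Wd_def using x sp by (intro continuous_intros) auto
qed

lemma Wf_lim0: "(Wf p q \<longlongrightarrow> 0) (at_right 0)"
  unfolding Wf_def using p q by real_asymp

lemma Wf_lim_inf: "(Wf p q \<longlongrightarrow> 1) at_top"
  unfolding Wf_def using p q by real_asymp

lemma Wf_lim_right: "u \<ge> 0 \<Longrightarrow> (Wf p q \<longlongrightarrow> Wf p q u) (at_right u)"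
proof (cases "u = 0")
  case True thus ?thesis using Wf_lim0 by (simp add: Wf_0)
next
  case False
  assume "u \<ge> 0" hence "u > 0" using False by simp
  hence "isCont (Wf p q) u" using Wf_deriv DERIV_isCont by blast
  thus ?thesis by (simp add: isCont_def filterlim_at_split)
qed

end

context
  fixes p q :: real and h :: "real \<Rightarrow> real"
  assumes p: "p > 0" and q: "q > 0" and h: "hfun h"
begin

lemma FTCW_deriv: "x > 0 \<Longrightarrow> ((\<lambda>x. LI h (Wf p q x)) has_real_derivative Wd p q x * h (Wf p q x)) (at x)"
proof -
  assume x: "x > 0"
  have r: "0 < Wf p q x" "Wf p q x < 1" using Wf_range[OF p q x] by auto
  have "((\<lambda>x. LI h (Wf p q x)) has_real_derivative h (Wf p q x) * Wd p q x) (at x)"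
    by (rule DERIV_chain2[OF hfun.LI_deriv[OF h r] Wf_deriv[OF p q x]])
  thus ?thesis by (simp add: mult.commute)
qed

lemma FTCW_cont: "x > 0 \<Longrightarrow> isCont (\<lambda>x. Wd p q x * h (Wf p q x)) x"
proof -
  assume x: "x > 0"
  have r: "0 < Wf p q x" "Wf p q x < 1" using Wf_range[OF p q x] by auto
  have "isCont (Wf p q) x" using Wf_deriv[OF p q x] by (rule DERIV_isCont)
  moreover have "isCont h (Wf p q x)" using hfun.h_cont[OF h r] .
  ultimately have "isCont (\<lambda>x. h (Wf p q x)) x" by (rule isCont_o2)
  thus ?thesis using Wd_cont[OF p q x] by (intro continuous_intros)
qed

lemma FTCW_nonneg: "x > 0 \<Longrightarrow> 0 \<le> Wd p q x * h (Wf p q x)"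
proof -
  assume x: "x > 0"
  have r: "0 < Wf p q x" "Wf p q x < 1" using Wf_range[OF p q x] by auto
  show ?thesis using Wd_pos[OF p q x] hfun.h_nonneg[OF h r] by simp
qed

lemma FTCW_lim_right:
  assumes u: "u \<ge> 0"
  shows "((\<lambda>x. LI h (Wf p q x)) \<longlongrightarrow> LI h (Wf p q u)) (at_right u)"
proof (rule continuous_on_tendsto_compose[OF hfun.LI_cont[OF h] Wf_lim_right[OF p q u]])
  show "Wf p q u \<in> {0..1}"
    using u Wf_range[OF p q, of u] Wf_0[OF p q] by (cases "u = 0") auto
  have "eventually (\<lambda>x. x > u) (at_right u)" by (simp add: eventually_at_right_less)
  thus "eventually (\<lambda>x. Wf p q x \<in> {0..1}) (at_right u)"
    by eventually_elim (use u Wf_range[OF p q] in \<open>auto simp: less_imp_le\<close>)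
qed

lemma FTCW_lim_left:
  assumes v: "v > 0"
  shows "((\<lambda>x. LI h (Wf p q x)) \<longlongrightarrow> LI h (Wf p q v)) (at_left v)"
proof -
  have "isCont (\<lambda>x. LI h (Wf p q x)) v" using FTCW_deriv[OF v] by (rule DERIV_isCont)
  thus ?thesis by (simp add: isCont_def filterlim_at_split)
qed

lemma FTCW_lim_top: "((\<lambda>x. LI h (Wf p q x)) \<longlongrightarrow> LI h 1) at_top"
proof (rule continuous_on_tendsto_compose[OF hfun.LI_cont[OF h] Wf_lim_inf[OF p q]])
  show "(1::real) \<in> {0..1}" by simp
  have "eventually (\<lambda>x. x > 0) (at_top :: real filter)" by (rule eventually_gt_at_top)
  thus "eventually (\<lambda>x. Wf p q x \<in> {0..1}) at_top"
    by eventually_elim (use Wf_range[OF p q] in \<open>auto simp: less_imp_le\<close>)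
qed

lemma FTCW:
  assumes u: "0 \<le> u" and uv: "u < v"
  shows "set_integrable lborel {u<..<v} (\<lambda>x. Wd p q x * h (Wf p q x))"
    "(LBINT x:{u<..<v}. Wd p q x * h (Wf p q x)) = LI h (Wf p q v) - LI h (Wf p q u)"
proof -
  note * = FTC_nonneg_real[of u v "\<lambda>x. LI h (Wf p q x)" "\<lambda>x. Wd p q x * h (Wf p q x)"
      "LI h (Wf p q u)" "LI h (Wf p q v)"]
  have prem: "u < v" "\<And>x. u < x \<Longrightarrow> x < v \<Longrightarrow> ((\<lambda>x. LI h (Wf p q x)) has_real_derivative Wd p q x * h (Wf p q x)) (at x)"
    "\<And>x. u < x \<Longrightarrow> x < v \<Longrightarrow> isCont (\<lambda>x. Wd p q x * h (Wf p q x)) x"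
    "\<And>x. u < x \<Longrightarrow> x < v \<Longrightarrow> 0 \<le> Wd p q x * h (Wf p q x)"
    using uv u by (auto intro!: FTCW_deriv FTCW_cont FTCW_nonneg)
  show "set_integrable lborel {u<..<v} (\<lambda>x. Wd p q x * h (Wf p q x))"
    using *(1)[OF prem FTCW_lim_right[OF u] FTCW_lim_left] u uv by simp
  show "(LBINT x:{u<..<v}. Wd p q x * h (Wf p q x)) = LI h (Wf p q v) - LI h (Wf p q u)"
    using *(2)[OF prem FTCW_lim_right[OF u] FTCW_lim_left] u uv by simp
qed

lemma FTCW_inf:
  assumes u: "0 \<le> u"
  shows "set_integrable lborel {u<..} (\<lambda>x. Wd p q x * h (Wf p q x))"
    "(LBINT x:{u<..}. Wd p q x * h (Wf p q x)) = LI h 1 - LI h (Wf p q u)"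
proof -
  note * = FTC_nonneg_real_inf[of u "\<lambda>x. LI h (Wf p q x)" "\<lambda>x. Wd p q x * h (Wf p q x)"
      "LI h (Wf p q u)" "LI h 1"]
  have prem: "\<And>x. u < x \<Longrightarrow> ((\<lambda>x. LI h (Wf p q x)) has_real_derivative Wd p q x * h (Wf p q x)) (at x)"
    "\<And>x. u < x \<Longrightarrow> isCont (\<lambda>x. Wd p q x * h (Wf p q x)) x"
    "\<And>x. u < x \<Longrightarrow> 0 \<le> Wd p q x * h (Wf p q x)"
    using u by (auto intro!: FTCW_deriv FTCW_cont FTCW_nonneg)
  show "set_integrable lborel {u<..} (\<lambda>x. Wd p q x * h (Wf p q x))"
    using *(1)[OF prem FTCW_lim_right[OF u] FTCW_lim_top] .
  show "(LBINT x:{u<..}. Wd p q x * h (Wf p q x)) = LI h 1 - LI h (Wf p q u)"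
    using *(2)[OF prem FTCW_lim_right[OF u] FTCW_lim_top] .
qed

end

definition hB :: "real \<Rightarrow> real \<Rightarrow> real \<Rightarrow> real" where
  "hB a b t = t powr (a - 1) * (1 - t) powr (b - 1)"

lemma hfun_hB: "a > 0 \<Longrightarrow> b > 0 \<Longrightarrow> hfun (hB a b)"
  unfolding hfun_def hB_def
  using integrable_Beta' beta_integrand_isCont by auto

lemma LI_hB_inc_Beta:
  assumes a: "a > 0" and b: "b > 0" and t: "0 \<le> t" "t \<le> 1"
  shows "LI (hB a b) t = inc_Beta t a b"
proof -
  have "set_integrable lborel {0..t} (\<lambda>s. s powr (a - 1) * (1 - s) powr (b - 1))"
    by (rule set_integrable_subset[OF integrable_Beta[OF a b]]) (use t in auto)
  from set_borel_integral_eq_integral(2)[OF this] show ?thesis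
    unfolding LI_def inc_Beta_def hB_def by simp
qed

lemma LI_hB_1: "a > 0 \<Longrightarrow> b > 0 \<Longrightarrow> LI (hB a b) 1 = Beta a b"
  unfolding LI_def hB_def using has_integral_Beta_real by (simp add: integral_unique)

lemma aux_exp1: "(p::real) / (exp lq * B) * exp A / exp C = p / B * exp (A - C - lq)"
proof -
  have "exp (A - C - lq) = exp A / exp C / exp lq" by (simp only: exp_diff)
  thus ?thesis by simp
qed

lemma aux_exp2: "(p::real) * exp A * exp C / exp D * (exp E * exp F) / B = p / B * exp (A + C - D + (E + F))"
proof -
  have "exp (A + C - D + (E + F)) = exp A * exp C / exp D * (exp E * exp F)" by (simp only: exp_diff exp_add)
  thus ?thesis by (simp add: mult.commute mult.left_commute)
qed

context
  fixes p q :: real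
  assumes p: "p > 0" and q: "q > 0"
begin

lemma x_ident:
  assumes x: "x > 0"
  shows "Wf p q x powr (1 / p) * (1 - Wf p q x) powr (- 1 / p) = x / q"
proof -
  define s where "s = q powr p + x powr p"
  have qp: "q powr p > 0" and xp: "x powr p > 0" using q x by auto
  have s: "s > 0" unfolding s_def using qp xp by linarith
  have W: "Wf p q x = x powr p / s" unfolding Wf_def s_def ..
  have W1: "1 - Wf p q x = q powr p / s" unfolding W using s by (simp add: s_def field_simps)
  have "(x powr p / s) powr (1 / p) = x / s powr (1 / p)"
    using x s p by (simp add: powr_divide powr_powr)
  note A = this
  have "(q powr p / s) powr (- 1 / p) = s powr (1 / p) / q"
  proof -
    have "(q powr p / s) powr (- 1 / p) = 1 / ((q powr p / s) powr (1 / p))"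
      by (simp add: powr_minus_divide[symmetric] powr_minus)
    also have "(q powr p / s) powr (1 / p) = q / s powr (1 / p)"
      using q s p by (simp add: powr_divide powr_powr)
    finally show ?thesis using s q by simp
  qed
  note B = this
  show ?thesis
    apply (subst W1)
    apply (subst W)
    using A B s by simp
qed


lemma density_eq:
  assumes x: "x > 0"
  shows "gbp_density \<alpha> \<beta> p q x = Wd p q x * hB \<alpha> \<beta> (Wf p q x) / Beta \<alpha> \<beta>"
proof -
  define lx where "lx = ln x"
  define lq where "lq = ln q"
  define s where "s = q powr p + x powr p"
  have qp: "q powr p > 0" and xp: "x powr p > 0" using q x by auto
  have s: "s > 0" unfolding s_def using qp xp by linarith
  define ls where "ls = ln s"
  have ex: "x powr r = exp (r * lx)" for r using x by (simp add: powr_def lx_def)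
  have eq: "q powr r = exp (r * lq)" for r using q by (simp add: powr_def lq_def)
  have es: "s = exp ls" using s by (simp add: ls_def)
  have W: "Wf p q x = exp (p * lx - ls)"
    unfolding Wf_def s_def[symmetric] by (simp add: exp_diff ex es[symmetric])
  have W1: "1 - Wf p q x = exp (p * lq - ls)"
  proof -
    have "1 - Wf p q x = q powr p / s" unfolding Wf_def s_def[symmetric] using s by (simp add: s_def field_simps)
    thus ?thesis by (simp add: exp_diff eq es[symmetric])
  qed
  have ep: "exp a powr r = exp (r * a)" for a r :: real by (simp add: powr_def)
  have hBW: "hB \<alpha> \<beta> (Wf p q x) = exp ((\<alpha> - 1) * (p * lx - ls)) * exp ((\<beta> - 1) * (p * lq - ls))"
    unfolding hB_def W1 unfolding W ep ..
  have s2: "exp (2 * ls) = s\<^sup>2" by (simp only: mult_2 exp_add es[symmetric] power2_eq_square)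
  have Wd: "Wd p q x = p * exp ((p - 1) * lx) * exp (p * lq) / exp (2 * ls)"
    unfolding Wd_def unfolding s_def[symmetric] unfolding s2 ex eq ..
  have xq: "(x / q) powr r = exp (r * (lx - lq))" for r
    using x q by (simp add: powr_def lx_def lq_def ln_div)
  have one: "1 + (x / q) powr p = exp (ls - p * lq)"
  proof -
    have "1 + (x / q) powr p = s / q powr p"
      using qp by (simp add: s_def powr_divide x q less_imp_le field_simps)
    thus ?thesis by (simp add: exp_diff eq es[symmetric])
  qed
  have dens: "gbp_density \<alpha> \<beta> p q x = p / (q * Beta \<alpha> \<beta>) * exp ((\<alpha> * p - 1) * (lx - lq)) / exp ((\<alpha> + \<beta>) * (ls - p * lq))"
    unfolding gbp_density_def using x by (simp only: if_True one[unfolded xq] xq ep)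
  have qe: "q = exp lq" using q by (simp add: lq_def)
  have L: "gbp_density \<alpha> \<beta> p q x = p / Beta \<alpha> \<beta> * exp ((\<alpha> * p - 1) * (lx - lq) - (\<alpha> + \<beta>) * (ls - p * lq) - lq)"
    unfolding dens by (subst (1) qe) (rule aux_exp1)
  have R: "Wd p q x * hB \<alpha> \<beta> (Wf p q x) / Beta \<alpha> \<beta> = p / Beta \<alpha> \<beta> *
      exp ((p - 1) * lx + p * lq - 2 * ls + ((\<alpha> - 1) * (p * lx - ls) + (\<beta> - 1) * (p * lq - ls)))"
    unfolding Wd hBW by (rule aux_exp2)
  have E: "(\<alpha> * p - 1) * (lx - lq) - (\<alpha> + \<beta>) * (ls - p * lq) - lq =
      (p - 1) * lx + p * lq - 2 * ls + ((\<alpha> - 1) * (p * lx - ls) + (\<beta> - 1) * (p * lq - ls))"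
    by (simp add: algebra_simps)
  show ?thesis unfolding L R E ..
qed

lemma hB_shift:
  assumes x: "x > 0"
  shows "x * hB a b (Wf p q x) = q * hB (a + 1 / p) (b - 1 / p) (Wf p q x)"
proof -
  define W where "W = Wf p q x"
  have r: "0 < W" "W < 1" using Wf_range[OF p q x] by (auto simp: W_def)
  have "hB (a + 1 / p) (b - 1 / p) W = hB a b W * (W powr (1 / p) * (1 - W) powr (- 1 / p))"
    unfolding hB_def using r
    by (simp add: powr_add[symmetric] algebra_simps diff_divide_distrib)
  also have "W powr (1 / p) * (1 - W) powr (- 1 / p) = x / q" unfolding W_def by (rule x_ident[OF x])
  finally show ?thesis using q by (simp add: W_def field_simps)
qed

lemma w_shift:
  assumes x: "x > 0"
  shows "x * (Wf p q x powr a * (1 - Wf p q x) powr b) =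
         q * (Wf p q x powr (a + 1 / p) * (1 - Wf p q x) powr (b - 1 / p))"
proof -
  define W where "W = Wf p q x"
  have r: "0 < W" "W < 1" using Wf_range[OF p q x] by (auto simp: W_def)
  have "W powr (a + 1 / p) * (1 - W) powr (b - 1 / p) = (W powr a * (1 - W) powr b) * (W powr (1 / p) * (1 - W) powr (- 1 / p))"
    using r by (simp add: powr_add[symmetric] algebra_simps diff_divide_distrib)
  also have "W powr (1 / p) * (1 - W) powr (- 1 / p) = x / q" unfolding W_def by (rule x_ident[OF x])
  finally show ?thesis using q by (simp add: W_def field_simps)
qed

end

lemma Beta_pos_real: "a > 0 \<Longrightarrow> b > 0 \<Longrightarrow> Beta a b > (0::real)"
  unfolding Beta_def by (intro divide_pos_pos mult_pos_pos Gamma_real_pos) auto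

definition Fx :: "real \<Rightarrow> real \<Rightarrow> real \<Rightarrow> real \<Rightarrow> real \<Rightarrow> real" where
  "Fx \<alpha> \<beta> p q x = (if x > 0 then LI (hB \<alpha> \<beta>) (Wf p q x) / Beta \<alpha> \<beta> else 0)"

context
  fixes \<alpha> \<beta> p q :: real
  assumes al: "\<alpha> > 0" and be: "\<beta> > 0" and p: "p > 0" and q: "q > 0"
begin

lemma density_nonpos: "x \<le> 0 \<Longrightarrow> gbp_density \<alpha> \<beta> p q x = 0"
  by (simp add: gbp_density_def)

lemma hfun_main: "hfun (hB \<alpha> \<beta>)" using hfun_hB al be .

lemma cdf_eq: "gbp_cdf \<alpha> \<beta> p q x = Fx \<alpha> \<beta> p q x"
proof (cases "x > 0")
  case False
  have "(LBINT z:{..x}. gbp_density \<alpha> \<beta> p q z) = (LBINT z:{..x}. 0)"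
    unfolding set_lebesgue_integral_def
    by (rule Bochner_Integration.integral_cong) (use False in \<open>auto simp: indicator_def density_nonpos\<close>)
  thus ?thesis using False by (simp add: gbp_cdf_def Fx_def)
next
  case True
  have "(LBINT z:{..x}. gbp_density \<alpha> \<beta> p q z) = (LBINT z:{0<..x}. gbp_density \<alpha> \<beta> p q z)"
    unfolding set_lebesgue_integral_def
    by (rule Bochner_Integration.integral_cong) (auto simp: indicator_def density_nonpos)
  also have "\<dots> = (LBINT z:{0<..<x}. gbp_density \<alpha> \<beta> p q z)"
    by (rule set_integral_discrete_difference[where X="{x}"]) auto
  also have "\<dots> = (LBINT z:{0<..<x}. Wd p q z * hB \<alpha> \<beta> (Wf p q z) / Beta \<alpha> \<beta>)"
    by (rule set_lebesgue_integral_cong) (auto simp: density_eq[OF p q])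
  also have "\<dots> = (LBINT z:{0<..<x}. Wd p q z * hB \<alpha> \<beta> (Wf p q z)) / Beta \<alpha> \<beta>"
    by simp
  also have "(LBINT z:{0<..<x}. Wd p q z * hB \<alpha> \<beta> (Wf p q z)) = LI (hB \<alpha> \<beta>) (Wf p q x) - LI (hB \<alpha> \<beta>) (Wf p q 0)"
    by (rule FTCW(2)[OF p q hfun_main]) (use True in auto)
  finally show ?thesis using True
    by (simp add: gbp_cdf_def Fx_def Wf_0[OF p q] hfun.LI_0[OF hfun_main])
qed

lemma one_minus_Fx:
  assumes x: "x > 0"
  shows "set_integrable lborel {x<..} (\<lambda>z. Wd p q z * hB \<alpha> \<beta> (Wf p q z))"
    "1 - Fx \<alpha> \<beta> p q x = (LBINT z:{x<..}. Wd p q z * hB \<alpha> \<beta> (Wf p q z)) / Beta \<alpha> \<beta>"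
proof -
  show "set_integrable lborel {x<..} (\<lambda>z. Wd p q z * hB \<alpha> \<beta> (Wf p q z))"
    by (rule FTCW_inf(1)[OF p q hfun_main]) (use x in auto)
  have "(LBINT z:{x<..}. Wd p q z * hB \<alpha> \<beta> (Wf p q z)) = LI (hB \<alpha> \<beta>) 1 - LI (hB \<alpha> \<beta>) (Wf p q x)"
    by (rule FTCW_inf(2)[OF p q hfun_main]) (use x in auto)
  thus "1 - Fx \<alpha> \<beta> p q x = (LBINT z:{x<..}. Wd p q z * hB \<alpha> \<beta> (Wf p q z)) / Beta \<alpha> \<beta>"
    using x Beta_pos_real[OF al be] by (simp add: Fx_def LI_hB_1[OF al be] field_simps)
qed

end

lemma Beta_shift:
  assumes C: "C > 0" and D: "D > 0"
  shows "Beta (C + real n) D = Beta C D * pochhammer C n / pochhammer (C + D) n"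
proof (induction n)
  case 0 thus ?case by simp
next
  case (Suc n)
  have nz: "C + real n \<notin> \<int>\<^sub>\<le>\<^sub>0" using C by (auto dest: nonpos_Ints_nonpos)
  have pos: "C + real n + D > 0" using C D by simp
  have "(C + real n + D) * Beta (C + real n + 1) D = (C + real n) * Beta (C + real n) D"
    by (rule Beta_plus1_left[OF nz])
  hence "Beta (C + real (Suc n)) D = (C + real n) * Beta (C + real n) D / (C + real n + D)"
    using pos by (simp add: field_simps add_ac)
  also have "\<dots> = Beta C D * pochhammer C (Suc n) / pochhammer (C + D) (Suc n)"
    unfolding Suc.IH pochhammer_rec' using pos by (simp add: field_simps add_ac)
  finally show ?case .
qed

lemma hB_nonneg: "hB a b t \<ge> 0"
  unfolding hB_def by simp

definition hK :: "real \<Rightarrow> real \<Rightarrow> real \<Rightarrow> real \<Rightarrow> real" where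
  "hK \<alpha> \<beta> p t = hB (\<alpha> + 1 / p) (\<beta> - 1 / p) t * LI (hB \<alpha> \<beta>) t"

context
  fixes \<alpha> \<beta> p :: real
  assumes al: "\<alpha> > 0" and be: "\<beta> > 0" and p: "p > 0" and bp: "\<beta> * p > 1"
begin

lemma b'_pos: "\<beta> - 1 / p > 0"
  using bp p by (simp add: field_simps)

lemma D_pos: "2 * \<beta> - 1 / p > 0"
  using b'_pos be by simp

lemma C_pos: "2 * \<alpha> + 1 / p > 0"
  using al p by (simp add: add_pos_pos)

lemma LI_main_bounds:
  assumes t: "0 \<le> t" "t \<le> 1"
  shows "0 \<le> LI (hB \<alpha> \<beta>) t" "LI (hB \<alpha> \<beta>) t \<le> Beta \<alpha> \<beta>"
proof -
  have int1: "hB \<alpha> \<beta> integrable_on {0..1}" using hfun.h_int[OF hfun_hB[OF al be]] .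
  have int: "hB \<alpha> \<beta> integrable_on {0..t}"
    by (rule integrable_on_subinterval[OF int1]) (use t in auto)
  show "0 \<le> LI (hB \<alpha> \<beta>) t" unfolding LI_def
    by (rule integral_nonneg[OF int]) (simp add: hB_nonneg)
  have "integral {0..t} (hB \<alpha> \<beta>) \<le> integral {0..1} (hB \<alpha> \<beta>)"
    by (rule integral_subset_le[OF _ int int1]) (use t in \<open>auto simp: hB_nonneg\<close>)
  thus "LI (hB \<alpha> \<beta>) t \<le> Beta \<alpha> \<beta>"
    using LI_hB_1[OF al be] by (simp add: LI_def)
qed

lemma hK_series:
  assumes t: "0 \<le> t" "t \<le> 1"
  shows "(\<lambda>n. sc \<alpha> \<beta> n * hB (2 * \<alpha> + 1 / p + real n) (2 * \<beta> - 1 / p) t) sums hK \<alpha> \<beta> p t"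
proof (cases "t = 0 \<or> t = 1")
  case True
  have "hB (2 * \<alpha> + 1 / p + real n) (2 * \<beta> - 1 / p) t = 0" for n
    using True C_pos D_pos by (auto simp: hB_def)
  moreover have "hK \<alpha> \<beta> p t = 0"
    using True b'_pos al p by (auto simp: hK_def hB_def add_pos_pos)
  ultimately show ?thesis by simp
next
  case False
  hence t': "0 < t" "t < 1" using t by auto
  have LI: "LI (hB \<alpha> \<beta>) t = t powr \<alpha> * (1 - t) powr \<beta> * Ss \<alpha> \<beta> t"
    using LI_hB_inc_Beta[OF al be t] inc_Beta_Gs[OF al be t(1) t'(2)] by (simp add: Gs_def)
  have s: "(\<lambda>n. sc \<alpha> \<beta> n * t ^ n) sums Ss \<alpha> \<beta> t"
    unfolding Ss_def by (rule summable_sums, rule summable_sc) (use al be t' in auto)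
  define c where "c = hB (\<alpha> + 1 / p) (\<beta> - 1 / p) t * (t powr \<alpha> * (1 - t) powr \<beta>)"
  have "(\<lambda>n. c * (sc \<alpha> \<beta> n * t ^ n)) sums (c * Ss \<alpha> \<beta> t)" by (rule sums_mult[OF s])
  moreover have "c * Ss \<alpha> \<beta> t = hK \<alpha> \<beta> p t" unfolding hK_def LI c_def by (simp add: mult_ac)
  moreover have "c * (sc \<alpha> \<beta> n * t ^ n) = sc \<alpha> \<beta> n * hB (2 * \<alpha> + 1 / p + real n) (2 * \<beta> - 1 / p) t" for n
  proof -
    have tn: "t ^ n = t powr real n" using t' by (simp add: powr_realpow)
    have ex1: "2 * \<alpha> + 1 / p + real n - 1 = (\<alpha> + 1 / p - 1) + \<alpha> + real n" by simp
    have ex2: "2 * \<beta> - 1 / p - 1 = (\<beta> - 1 / p - 1) + \<beta>" by simp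
    have e1: "t powr (2 * \<alpha> + 1 / p + real n - 1) = t powr (\<alpha> + 1 / p - 1) * t powr \<alpha> * t powr real n"
      unfolding ex1 by (simp only: powr_add)
    have e2: "(1 - t) powr (2 * \<beta> - 1 / p - 1) = (1 - t) powr (\<beta> - 1 / p - 1) * (1 - t) powr \<beta>"
      unfolding ex2 by (simp only: powr_add)
    show ?thesis unfolding c_def hB_def e1 e2 tn by (simp only: mult_ac)
  qed
  ultimately show ?thesis by simp
qed

end

context
  fixes \<alpha> \<beta> p :: real
  assumes al: "\<alpha> > 0" and be: "\<beta> > 0" and p: "p > 0" and bp: "\<beta> * p > 1"
begin

lemma hK_MCT:
  shows "hK \<alpha> \<beta> p integrable_on {0..1}"
    "(\<lambda>n. sc \<alpha> \<beta> n * Beta (2 * \<alpha> + 1 / p + real n) (2 * \<beta> - 1 / p)) sums integral {0..1} (hK \<alpha> \<beta> p)"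
proof -
  define C where "C = 2 * \<alpha> + 1 / p"
  define D where "D = 2 * \<beta> - 1 / p"
  have C: "C > 0" unfolding C_def by (rule C_pos[OF al be p bp])
  have D: "D > 0" unfolding D_def by (rule D_pos[OF al be p bp])
  have a'b': "\<alpha> + 1 / p > 0" "\<beta> - 1 / p > 0" using C_pos[OF al be p bp] b'_pos[OF al be p bp] al p
    by (auto simp: add_pos_pos)
  define f where "f k t = (\<Sum>n<k. sc \<alpha> \<beta> n * hB (C + real n) D t)" for k t
  have fint: "(f k has_integral (\<Sum>n<k. sc \<alpha> \<beta> n * Beta (C + real n) D)) {0..1}" for k
    unfolding f_def
    by (intro has_integral_sum has_integral_mult_right)
       (use has_integral_Beta_real[of "C + real _" D] C D in \<open>auto simp: hB_def\<close>)
  have bound_int: "((\<lambda>t. Beta \<alpha> \<beta> * hB (\<alpha> + 1 / p) (\<beta> - 1 / p) t) has_integral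
      Beta \<alpha> \<beta> * Beta (\<alpha> + 1 / p) (\<beta> - 1 / p)) {0..1}"
    by (intro has_integral_mult_right) (use has_integral_Beta_real[OF a'b'] in \<open>simp add: hB_def\<close>)
  have ser: "(\<lambda>n. sc \<alpha> \<beta> n * hB (C + real n) D t) sums hK \<alpha> \<beta> p t" if "t \<in> {0..1}" for t
    using hK_series[OF al be p bp, of t] that by (simp add: C_def D_def)
  have fle: "f k t \<le> hK \<alpha> \<beta> p t" if "t \<in> {0..1}" for k t
  proof -
    have e: "hK \<alpha> \<beta> p t = (\<Sum>n. sc \<alpha> \<beta> n * hB (C + real n) D t)"
      using ser[OF that] by (simp add: sums_iff)
    show ?thesis unfolding f_def e
    proof (rule sum_le_suminf)
      show "summable (\<lambda>n. sc \<alpha> \<beta> n * hB (C + real n) D t)" using ser[OF that] by (simp add: sums_iff)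
      show "0 \<le> sc \<alpha> \<beta> m * hB (C + real m) D t" for m
        using sc_pos[OF al be] hB_nonneg by (simp add: less_imp_le)
    qed simp
  qed
  have hKle: "hK \<alpha> \<beta> p t \<le> Beta \<alpha> \<beta> * hB (\<alpha> + 1 / p) (\<beta> - 1 / p) t" if "t \<in> {0..1}" for t
  proof -
    have "hB (\<alpha> + 1 / p) (\<beta> - 1 / p) t * LI (hB \<alpha> \<beta>) t \<le> hB (\<alpha> + 1 / p) (\<beta> - 1 / p) t * Beta \<alpha> \<beta>"
      using LI_main_bounds[OF al be p bp, of t] that by (intro mult_left_mono hB_nonneg) auto
    thus ?thesis unfolding hK_def by (simp add: mult.commute)
  qed
  have MCT: "hK \<alpha> \<beta> p integrable_on {0..1} \<and>
      (\<lambda>k. integral {0..1} (f k)) \<longlonglongrightarrow> integral {0..1} (hK \<alpha> \<beta> p)"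
  proof (rule monotone_convergence_increasing)
    show "f k integrable_on {0..1}" for k using fint by blast
    show "f k t \<le> f (Suc k) t" if "t \<in> {0..1}" for k t
      unfolding f_def using sc_pos[OF al be, of k] hB_nonneg[of "C + real k" D t] by simp
    show "(\<lambda>k. f k t) \<longlonglongrightarrow> hK \<alpha> \<beta> p t" if "t \<in> {0..1}" for t
      using ser[OF that] unfolding f_def sums_def .
    have "\<bar>integral {0..1} (f k)\<bar> \<le> Beta \<alpha> \<beta> * Beta (\<alpha> + 1 / p) (\<beta> - 1 / p)" for k
    proof -
      have "0 \<le> integral {0..1} (f k)"
        by (rule integral_nonneg) (use fint in \<open>auto simp: f_def intro!: sum_nonneg mult_nonneg_nonneg less_imp_le[OF sc_pos[OF al be]] hB_nonneg\<close>)
      moreover have "integral {0..1} (f k) \<le> integral {0..1} (\<lambda>t. Beta \<alpha> \<beta> * hB (\<alpha> + 1 / p) (\<beta> - 1 / p) t)"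
        by (rule integral_le) (use fint bound_int in blast, use fint bound_int in blast,
             meson fle hKle order_trans)
      moreover have "integral {0..1} (\<lambda>t. Beta \<alpha> \<beta> * hB (\<alpha> + 1 / p) (\<beta> - 1 / p) t) =
          Beta \<alpha> \<beta> * Beta (\<alpha> + 1 / p) (\<beta> - 1 / p)" by (rule integral_unique[OF bound_int])
      ultimately show ?thesis by (simp only: abs_of_nonneg)
    qed
    thus "bounded (range (\<lambda>k. integral {0..1} (f k)))"
      unfolding bounded_iff by auto
  qed
  show "hK \<alpha> \<beta> p integrable_on {0..1}" using MCT by blast
  have "(\<lambda>k. \<Sum>n<k. sc \<alpha> \<beta> n * Beta (C + real n) D) \<longlonglongrightarrow> integral {0..1} (hK \<alpha> \<beta> p)"
  proof -
    have "integral {0..1} (f k) = (\<Sum>n<k. sc \<alpha> \<beta> n * Beta (C + real n) D)" for k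
      using fint[of k] by (rule integral_unique)
    thus ?thesis using MCT by simp
  qed
  thus "(\<lambda>n. sc \<alpha> \<beta> n * Beta (2 * \<alpha> + 1 / p + real n) (2 * \<beta> - 1 / p)) sums integral {0..1} (hK \<alpha> \<beta> p)"
    unfolding sums_def C_def D_def .
qed

end

context
  fixes \<alpha> \<beta> p :: real
  assumes al: "\<alpha> > 0" and be: "\<beta> > 0" and p: "p > 0" and bp: "\<beta> * p > 1"
begin

lemma hfun_hK: "hfun (hK \<alpha> \<beta> p)"
proof
  show "hK \<alpha> \<beta> p integrable_on {0..1}" by (rule hK_MCT(1)[OF al be p bp])
  fix x :: real assume x: "0 < x" "x < 1"
  have "isCont (hB (\<alpha> + 1 / p) (\<beta> - 1 / p)) x"
    unfolding hB_def using beta_integrand_isCont[OF x] .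
  moreover have "isCont (LI (hB \<alpha> \<beta>)) x"
    using hfun.LI_deriv[OF hfun_hB[OF al be] x] by (rule DERIV_isCont)
  ultimately show "isCont (hK \<alpha> \<beta> p) x"
    unfolding hK_def by (intro continuous_intros) auto
  show "0 \<le> hK \<alpha> \<beta> p x"
    unfolding hK_def using LI_main_bounds[OF al be p bp, of x] x by (intro mult_nonneg_nonneg hB_nonneg) auto
qed

lemma hyp3F2_eq:
  "hyp3F2 (\<alpha> + \<beta>) 1 (2 * \<alpha> + 1 / p) (\<alpha> + 1) (2 * \<alpha> + 2 * \<beta>) 1 =
     \<alpha> / Beta (2 * \<alpha> + 1 / p) (2 * \<beta> - 1 / p) * LI (hK \<alpha> \<beta> p) 1"
proof -
  define C where "C = 2 * \<alpha> + 1 / p"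
  define D where "D = 2 * \<beta> - 1 / p"
  have C: "C > 0" unfolding C_def by (rule C_pos[OF al be p bp])
  have D: "D > 0" unfolding D_def by (rule D_pos[OF al be p bp])
  have CD: "C + D = 2 * \<alpha> + 2 * \<beta>" unfolding C_def D_def by simp
  have BCD: "Beta C D > 0" by (rule Beta_pos_real[OF C D])
  define I where "I = LI (hK \<alpha> \<beta> p) 1"
  define T where "T n = pochhammer (\<alpha> + \<beta>) n * pochhammer 1 n * pochhammer C n
            / (pochhammer (\<alpha> + 1) n * pochhammer (2 * \<alpha> + 2 * \<beta>) n * fact n) * 1 ^ n" for n
  have s: "(\<lambda>n. sc \<alpha> \<beta> n * Beta (C + real n) D) sums I"
    using hK_MCT(2)[OF al be p bp] by (simp add: I_def LI_def C_def D_def)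
  have eq: "sc \<alpha> \<beta> n * Beta (C + real n) D = Beta C D / \<alpha> * T n" for n
  proof -
    have p1: "pochhammer (\<alpha> + 1) n > 0" using al by (intro pochhammer_pos) auto
    have p2: "pochhammer (2 * \<alpha> + 2 * \<beta>) n > 0" using al be by (intro pochhammer_pos) auto
    have f: "(fact n :: real) > 0" by simp
    show ?thesis
      unfolding T_def sc_def Beta_shift[OF C D] CD pochhammer_rec[of \<alpha>] pochhammer_fact[symmetric]
      using p1 p2 f al by (simp add: field_simps)
  qed
  have "(\<lambda>n. \<alpha> / Beta C D * (sc \<alpha> \<beta> n * Beta (C + real n) D)) sums (\<alpha> / Beta C D * I)"
    by (rule sums_mult[OF s])
  moreover have "\<alpha> / Beta C D * (sc \<alpha> \<beta> n * Beta (C + real n) D) = T n" for n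
    unfolding eq using BCD al by simp
  ultimately have "T sums (\<alpha> / Beta C D * I)" by simp
  hence "suminf T = \<alpha> / Beta C D * I" by (rule sums_unique[symmetric])
  thus ?thesis unfolding hyp3F2_def T_def I_def C_def D_def by simp
qed

lemma hyp2F1_eq:
  assumes w: "0 < w" "w < 1"
  shows "hyp2F1 1 (\<alpha> + \<beta> - 1) (\<alpha> + 1 / p) w = 1 + (\<alpha> + \<beta> - 1) * w * Ss (\<alpha> + 1 / p) (\<beta> - 1 / p) w"
proof -
  define a' where "a' = \<alpha> + 1 / p"
  define b' where "b' = \<beta> - 1 / p"
  have a': "a' > 0" unfolding a'_def using al p by (simp add: add_pos_pos)
  have b': "b' > 0" unfolding b'_def by (rule b'_pos[OF al be p bp])
  have ab: "a' + b' = \<alpha> + \<beta>" unfolding a'_def b'_def by simp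
  define u where "u n = pochhammer 1 n * pochhammer (\<alpha> + \<beta> - 1) n / (pochhammer a' n * fact n) * w ^ n" for n
  have s: "(\<lambda>n. sc a' b' n * w ^ n) sums Ss a' b' w"
    unfolding Ss_def by (rule summable_sums, rule summable_sc) (use a' b' w in auto)
  have us: "u (Suc n) = (\<alpha> + \<beta> - 1) * w * (sc a' b' n * w ^ n)" for n
  proof -
    have pa: "pochhammer a' (Suc n) > 0" using a' by (intro pochhammer_pos) auto
    have r: "pochhammer (\<alpha> + \<beta> - 1) (Suc n) = (\<alpha> + \<beta> - 1) * pochhammer (\<alpha> + \<beta>) n"
      by (simp add: pochhammer_rec)
    have u': "u m = pochhammer (\<alpha> + \<beta> - 1) m / pochhammer a' m * w ^ m" for m
      unfolding u_def pochhammer_fact[symmetric] by simp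
    show ?thesis unfolding u' sc_def ab r
      using pa by (simp add: field_simps)
  qed
  have "(\<lambda>n. (\<alpha> + \<beta> - 1) * w * (sc a' b' n * w ^ n)) sums ((\<alpha> + \<beta> - 1) * w * Ss a' b' w)"
    by (rule sums_mult[OF s])
  hence "(\<lambda>n. u (Suc n)) sums ((\<alpha> + \<beta> - 1) * w * Ss a' b' w)" by (simp add: us)
  hence "u sums ((\<alpha> + \<beta> - 1) * w * Ss a' b' w + u 0)" by (simp add: sums_Suc_iff)
  hence "suminf u = (\<alpha> + \<beta> - 1) * w * Ss a' b' w + 1" by (simp add: sums_iff u_def)
  thus ?thesis unfolding hyp2F1_def u_def a'_def b'_def by simp
qed

end

context
  fixes \<alpha> \<beta> p q :: real
  assumes al: "\<alpha> > 0" and be: "\<beta> > 0" and p: "p > 0" and q: "q > 0" and bp: "\<beta> * p > 1"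
begin

lemma B_pos: "Beta \<alpha> \<beta> > 0" by (rule Beta_pos_real[OF al be])

lemma Bnz: "Beta \<alpha> \<beta> \<noteq> 0" using B_pos by simp

lemma a'_pos: "\<alpha> + 1 / p > 0" using al p by (simp add: add_pos_pos)

lemma hfun_M: "hfun (hB (\<alpha> + 1 / p) (\<beta> - 1 / p))"
  by (rule hfun_hB[OF a'_pos b'_pos[OF al be p bp]])

lemma dA: "x > 0 \<Longrightarrow> ((\<lambda>x. LI (hB \<alpha> \<beta>) (Wf p q x)) has_real_derivative Wd p q x * hB \<alpha> \<beta> (Wf p q x)) (at x)"
  by (rule FTCW_deriv[OF p q hfun_main[OF al be p q]])

lemma dM: "x > 0 \<Longrightarrow> ((\<lambda>x. LI (hB (\<alpha> + 1 / p) (\<beta> - 1 / p)) (Wf p q x)) has_real_derivative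
    Wd p q x * hB (\<alpha> + 1 / p) (\<beta> - 1 / p) (Wf p q x)) (at x)"
  by (rule FTCW_deriv[OF p q hfun_M])

lemma dK: "x > 0 \<Longrightarrow> ((\<lambda>x. LI (hK \<alpha> \<beta> p) (Wf p q x)) has_real_derivative Wd p q x * hK \<alpha> \<beta> p (Wf p q x)) (at x)"
  by (rule FTCW_deriv[OF p q hfun_hK[OF al be p bp]])

lemma hKx: "x > 0 \<Longrightarrow> hK \<alpha> \<beta> p (Wf p q x) = x / q * hB \<alpha> \<beta> (Wf p q x) * LI (hB \<alpha> \<beta>) (Wf p q x)"
  unfolding hK_def using hB_shift[OF p q, of x \<alpha> \<beta>] q by (simp add: field_simps)

lemma hMx: "x > 0 \<Longrightarrow> hB (\<alpha> + 1 / p) (\<beta> - 1 / p) (Wf p q x) = x / q * hB \<alpha> \<beta> (Wf p q x)"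
  using hB_shift[OF p q, of x \<alpha> \<beta>] q by (simp add: field_simps)

lemma piece1_deriv:
  assumes x: "x > 0"
  shows "((\<lambda>x. x * (LI (hB \<alpha> \<beta>) (Wf p q x) / Beta \<alpha> \<beta>)\<^sup>2 - 2 * (q / (Beta \<alpha> \<beta>)\<^sup>2 * LI (hK \<alpha> \<beta> p) (Wf p q x)))
     has_real_derivative (LI (hB \<alpha> \<beta>) (Wf p q x) / Beta \<alpha> \<beta>)\<^sup>2) (at x)"
  apply (rule DERIV_cong)
   apply (rule derivative_eq_intros dA[OF x] dK[OF x] Bnz refl)+
  using B_pos q x unfolding hKx[OF x] by (simp add: field_simps power2_eq_square)

lemma piece2_deriv:
  assumes x: "x > 0"
  shows "((\<lambda>x. x * (1 - LI (hB \<alpha> \<beta>) (Wf p q x) / Beta \<alpha> \<beta>)\<^sup>2 +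
      2 * (q / Beta \<alpha> \<beta> * LI (hB (\<alpha> + 1 / p) (\<beta> - 1 / p)) (Wf p q x) - q / (Beta \<alpha> \<beta>)\<^sup>2 * LI (hK \<alpha> \<beta> p) (Wf p q x)))
     has_real_derivative (1 - LI (hB \<alpha> \<beta>) (Wf p q x) / Beta \<alpha> \<beta>)\<^sup>2) (at x)"
  apply (rule DERIV_cong)
   apply (rule derivative_eq_intros dA[OF x] dK[OF x] dM[OF x] Bnz refl)+
  using B_pos q x unfolding hKx[OF x] hMx[OF x] by (simp add: field_simps power2_eq_square)

lemma isCont_LA: "x > 0 \<Longrightarrow> isCont (\<lambda>x. LI (hB \<alpha> \<beta>) (Wf p q x)) x"
  using dA by (rule DERIV_isCont)

lemma LA_bounds: "0 \<le> LI (hB \<alpha> \<beta>) (Wf p q x) \<and> LI (hB \<alpha> \<beta>) (Wf p q x) \<le> Beta \<alpha> \<beta>" if "x \<ge> 0"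
proof -
  have "0 \<le> Wf p q x \<and> Wf p q x \<le> 1"
    using that Wf_range[OF p q, of x] Wf_0[OF p q] by (cases "x = 0") auto
  thus ?thesis using LI_main_bounds[OF al be p bp] by auto
qed

lemma tail_lim:
  "((\<lambda>x. x * (1 - LI (hB \<alpha> \<beta>) (Wf p q x) / Beta \<alpha> \<beta>)\<^sup>2) \<longlongrightarrow> 0) at_top"
proof (rule tendsto_sandwich[where f="\<lambda>_. 0"])
  define LM where "LM = LI (hB (\<alpha> + 1 / p) (\<beta> - 1 / p))"
  define g where "g x = q * (LM 1 - LM (Wf p q x)) / Beta \<alpha> \<beta>" for x
  show "((\<lambda>_. 0) \<longlongrightarrow> (0::real)) at_top" by simp
  have "((\<lambda>x. q * (LM 1 - LM (Wf p q x)) / Beta \<alpha> \<beta>) \<longlongrightarrow> q * (LM 1 - LM 1) / Beta \<alpha> \<beta>) at_top"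
    unfolding LM_def by (intro tendsto_intros FTCW_lim_top[OF p q hfun_M] Bnz)
  thus "(g \<longlongrightarrow> 0) at_top" unfolding g_def by simp
  have ev: "eventually (\<lambda>x. x > (0::real)) at_top" by (rule eventually_gt_at_top)
  show "eventually (\<lambda>x. 0 \<le> x * (1 - LI (hB \<alpha> \<beta>) (Wf p q x) / Beta \<alpha> \<beta>)\<^sup>2) at_top"
    using ev by eventually_elim simp
  show "eventually (\<lambda>x. x * (1 - LI (hB \<alpha> \<beta>) (Wf p q x) / Beta \<alpha> \<beta>)\<^sup>2 \<le> g x) at_top"
    using ev
  proof eventually_elim
    case (elim x)
    define G where "G z = Wd p q z * hB \<alpha> \<beta> (Wf p q z)" for z
    have Fx: "Fx \<alpha> \<beta> p q x = LI (hB \<alpha> \<beta>) (Wf p q x) / Beta \<alpha> \<beta>" using elim by (simp add: Fx_def)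
    have int: "set_integrable lborel {x<..} G" unfolding G_def
      by (rule one_minus_Fx(1)[OF al be p q elim])
    have eq1: "1 - LI (hB \<alpha> \<beta>) (Wf p q x) / Beta \<alpha> \<beta> = (LBINT z:{x<..}. G z) / Beta \<alpha> \<beta>"
      using one_minus_Fx(2)[OF al be p q elim] unfolding Fx G_def .
    have intM: "set_integrable lborel {x<..} (\<lambda>z. Wd p q z * hB (\<alpha> + 1 / p) (\<beta> - 1 / p) (Wf p q z))"
      by (rule FTCW_inf(1)[OF p q hfun_M]) (use elim in auto)
    have eqM: "(LBINT z:{x<..}. Wd p q z * hB (\<alpha> + 1 / p) (\<beta> - 1 / p) (Wf p q z)) = LM 1 - LM (Wf p q x)"
      unfolding LM_def by (rule FTCW_inf(2)[OF p q hfun_M]) (use elim in auto)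
    have b: "0 \<le> 1 - LI (hB \<alpha> \<beta>) (Wf p q x) / Beta \<alpha> \<beta>" "1 - LI (hB \<alpha> \<beta>) (Wf p q x) / Beta \<alpha> \<beta> \<le> 1"
      using LA_bounds[of x] elim B_pos by (auto simp: field_simps)
    have "x * (1 - LI (hB \<alpha> \<beta>) (Wf p q x) / Beta \<alpha> \<beta>)\<^sup>2 \<le> x * (1 - LI (hB \<alpha> \<beta>) (Wf p q x) / Beta \<alpha> \<beta>)"
      using mult_right_le_one_le[OF b(1) b(1) b(2)] elim by (intro mult_left_mono) (auto simp only: power2_eq_square)
    also have "\<dots> = (LBINT z:{x<..}. x * G z) / Beta \<alpha> \<beta>" unfolding eq1 by simp
    also have "(LBINT z:{x<..}. x * G z) \<le> (LBINT z:{x<..}. q * (Wd p q z * hB (\<alpha> + 1 / p) (\<beta> - 1 / p) (Wf p q z)))"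
    proof (rule set_integral_mono)
      show "set_integrable lborel {x<..} (\<lambda>z. x * G z)" using int by simp
      show "set_integrable lborel {x<..} (\<lambda>z. q * (Wd p q z * hB (\<alpha> + 1 / p) (\<beta> - 1 / p) (Wf p q z)))"
        using intM by simp
      fix z assume z: "z \<in> {x<..}"
      hence z0: "z > 0" using elim by simp
      have "x * G z \<le> z * G z"
        using z z0 Wd_pos[OF p q z0] hB_nonneg by (intro mult_right_mono) (auto simp: G_def)
      also have "\<dots> = q * (Wd p q z * hB (\<alpha> + 1 / p) (\<beta> - 1 / p) (Wf p q z))"
        unfolding G_def hMx[OF z0] using q by simp
      finally show "x * G z \<le> q * (Wd p q z * hB (\<alpha> + 1 / p) (\<beta> - 1 / p) (Wf p q z))" .
    qed
    hence "(LBINT z:{x<..}. x * G z) / Beta \<alpha> \<beta> \<le> (LBINT z:{x<..}. q * (Wd p q z * hB (\<alpha> + 1 / p) (\<beta> - 1 / p) (Wf p q z))) / Beta \<alpha> \<beta>"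
      using B_pos by (simp add: divide_right_mono)
    also have "\<dots> = g x" unfolding g_def using eqM by simp
    finally show ?case .
  qed
qed

lemma piece1:
  assumes y: "y > 0"
  shows "set_integrable lborel {0<..<y} (\<lambda>x. (LI (hB \<alpha> \<beta>) (Wf p q x) / Beta \<alpha> \<beta>)\<^sup>2)"
    "(LBINT x:{0<..<y}. (LI (hB \<alpha> \<beta>) (Wf p q x) / Beta \<alpha> \<beta>)\<^sup>2) =
       y * (LI (hB \<alpha> \<beta>) (Wf p q y) / Beta \<alpha> \<beta>)\<^sup>2 - 2 * (q / (Beta \<alpha> \<beta>)\<^sup>2 * LI (hK \<alpha> \<beta> p) (Wf p q y)) - 0"
proof -
  define \<Phi> where "\<Phi> x = x * (LI (hB \<alpha> \<beta>) (Wf p q x) / Beta \<alpha> \<beta>)\<^sup>2 - 2 * (q / (Beta \<alpha> \<beta>)\<^sup>2 * LI (hK \<alpha> \<beta> p) (Wf p q x))" for x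
  note * = FTC_nonneg_real[of 0 y \<Phi> "\<lambda>x. (LI (hB \<alpha> \<beta>) (Wf p q x) / Beta \<alpha> \<beta>)\<^sup>2" 0 "\<Phi> y"]
  have prem: "0 < y" "\<And>x. 0 < x \<Longrightarrow> x < y \<Longrightarrow> (\<Phi> has_real_derivative (LI (hB \<alpha> \<beta>) (Wf p q x) / Beta \<alpha> \<beta>)\<^sup>2) (at x)"
    "\<And>x. 0 < x \<Longrightarrow> x < y \<Longrightarrow> isCont (\<lambda>x. (LI (hB \<alpha> \<beta>) (Wf p q x) / Beta \<alpha> \<beta>)\<^sup>2) x"
    "\<And>x. 0 < x \<Longrightarrow> x < y \<Longrightarrow> 0 \<le> (LI (hB \<alpha> \<beta>) (Wf p q x) / Beta \<alpha> \<beta>)\<^sup>2"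
    using y piece1_deriv unfolding \<Phi>_def[abs_def] by (auto intro!: continuous_intros isCont_LA simp: Bnz)
  have A: "(\<Phi> \<longlongrightarrow> 0) (at_right 0)"
  proof -
    have l1: "((\<lambda>x. LI (hB \<alpha> \<beta>) (Wf p q x)) \<longlongrightarrow> 0) (at_right 0)"
      using FTCW_lim_right[OF p q hfun_main[OF al be p q], of 0]
      by (simp add: Wf_0[OF p q] hfun.LI_0[OF hfun_main[OF al be p q]])
    have l2: "((\<lambda>x. LI (hK \<alpha> \<beta> p) (Wf p q x)) \<longlongrightarrow> 0) (at_right 0)"
      using FTCW_lim_right[OF p q hfun_hK[OF al be p bp], of 0]
      by (simp add: Wf_0[OF p q] hfun.LI_0[OF hfun_hK[OF al be p bp]])
    have "(\<Phi> \<longlongrightarrow> 0 * (0 / Beta \<alpha> \<beta>)\<^sup>2 - 2 * (q / (Beta \<alpha> \<beta>)\<^sup>2 * 0)) (at_right 0)"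
      unfolding \<Phi>_def by (intro tendsto_intros l1 l2) (auto simp: Bnz)
    thus ?thesis by simp
  qed
  have Bl: "(\<Phi> \<longlongrightarrow> \<Phi> y) (at_left y)"
  proof -
    have "isCont \<Phi> y" using piece1_deriv[OF y] unfolding \<Phi>_def[abs_def] by (rule DERIV_isCont)
    thus ?thesis by (simp add: isCont_def filterlim_at_split)
  qed
  show "set_integrable lborel {0<..<y} (\<lambda>x. (LI (hB \<alpha> \<beta>) (Wf p q x) / Beta \<alpha> \<beta>)\<^sup>2)"
    using *(1)[OF prem A Bl] .
  show "(LBINT x:{0<..<y}. (LI (hB \<alpha> \<beta>) (Wf p q x) / Beta \<alpha> \<beta>)\<^sup>2) =
       y * (LI (hB \<alpha> \<beta>) (Wf p q y) / Beta \<alpha> \<beta>)\<^sup>2 - 2 * (q / (Beta \<alpha> \<beta>)\<^sup>2 * LI (hK \<alpha> \<beta> p) (Wf p q y)) - 0"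
    using *(2)[OF prem A Bl] unfolding \<Phi>_def .
qed

lemma piece2:
  assumes y: "y > 0"
  shows "set_integrable lborel {y<..} (\<lambda>x. (1 - LI (hB \<alpha> \<beta>) (Wf p q x) / Beta \<alpha> \<beta>)\<^sup>2)"
    "(LBINT x:{y<..}. (1 - LI (hB \<alpha> \<beta>) (Wf p q x) / Beta \<alpha> \<beta>)\<^sup>2) =
       2 * (q / Beta \<alpha> \<beta> * LI (hB (\<alpha> + 1 / p) (\<beta> - 1 / p)) 1 - q / (Beta \<alpha> \<beta>)\<^sup>2 * LI (hK \<alpha> \<beta> p) 1) -
       (y * (1 - LI (hB \<alpha> \<beta>) (Wf p q y) / Beta \<alpha> \<beta>)\<^sup>2 +
      2 * (q / Beta \<alpha> \<beta> * LI (hB (\<alpha> + 1 / p) (\<beta> - 1 / p)) (Wf p q y) - q / (Beta \<alpha> \<beta>)\<^sup>2 * LI (hK \<alpha> \<beta> p) (Wf p q y)))"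
proof -
  define \<Phi> where "\<Phi> x = x * (1 - LI (hB \<alpha> \<beta>) (Wf p q x) / Beta \<alpha> \<beta>)\<^sup>2 +
      2 * (q / Beta \<alpha> \<beta> * LI (hB (\<alpha> + 1 / p) (\<beta> - 1 / p)) (Wf p q x) - q / (Beta \<alpha> \<beta>)\<^sup>2 * LI (hK \<alpha> \<beta> p) (Wf p q x))" for x
  note * = FTC_nonneg_real_inf[of y \<Phi> "\<lambda>x. (1 - LI (hB \<alpha> \<beta>) (Wf p q x) / Beta \<alpha> \<beta>)\<^sup>2" "\<Phi> y"
     "2 * (q / Beta \<alpha> \<beta> * LI (hB (\<alpha> + 1 / p) (\<beta> - 1 / p)) 1 - q / (Beta \<alpha> \<beta>)\<^sup>2 * LI (hK \<alpha> \<beta> p) 1)"]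
  have prem: "\<And>x. y < x \<Longrightarrow> (\<Phi> has_real_derivative (1 - LI (hB \<alpha> \<beta>) (Wf p q x) / Beta \<alpha> \<beta>)\<^sup>2) (at x)"
    "\<And>x. y < x \<Longrightarrow> isCont (\<lambda>x. (1 - LI (hB \<alpha> \<beta>) (Wf p q x) / Beta \<alpha> \<beta>)\<^sup>2) x"
    "\<And>x. y < x \<Longrightarrow> 0 \<le> (1 - LI (hB \<alpha> \<beta>) (Wf p q x) / Beta \<alpha> \<beta>)\<^sup>2"
    using y piece2_deriv unfolding \<Phi>_def[abs_def] by (auto intro!: continuous_intros isCont_LA simp: Bnz)
  have A: "(\<Phi> \<longlongrightarrow> \<Phi> y) (at_right y)"
  proof -
    have "isCont \<Phi> y" using piece2_deriv[OF y] unfolding \<Phi>_def[abs_def] by (rule DERIV_isCont)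
    thus ?thesis by (simp add: isCont_def filterlim_at_split)
  qed
  have Bl: "(\<Phi> \<longlongrightarrow> 2 * (q / Beta \<alpha> \<beta> * LI (hB (\<alpha> + 1 / p) (\<beta> - 1 / p)) 1 - q / (Beta \<alpha> \<beta>)\<^sup>2 * LI (hK \<alpha> \<beta> p) 1)) at_top"
  proof -
    have "(\<Phi> \<longlongrightarrow> 0 + 2 * (q / Beta \<alpha> \<beta> * LI (hB (\<alpha> + 1 / p) (\<beta> - 1 / p)) 1 - q / (Beta \<alpha> \<beta>)\<^sup>2 * LI (hK \<alpha> \<beta> p) 1)) at_top"
      unfolding \<Phi>_def
      by (intro tendsto_intros tail_lim FTCW_lim_top[OF p q hfun_M] FTCW_lim_top[OF p q hfun_hK[OF al be p bp]])
    thus ?thesis by simp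
  qed
  show "set_integrable lborel {y<..} (\<lambda>x. (1 - LI (hB \<alpha> \<beta>) (Wf p q x) / Beta \<alpha> \<beta>)\<^sup>2)"
    using *(1)[OF prem A Bl] .
  show "(LBINT x:{y<..}. (1 - LI (hB \<alpha> \<beta>) (Wf p q x) / Beta \<alpha> \<beta>)\<^sup>2) =
       2 * (q / Beta \<alpha> \<beta> * LI (hB (\<alpha> + 1 / p) (\<beta> - 1 / p)) 1 - q / (Beta \<alpha> \<beta>)\<^sup>2 * LI (hK \<alpha> \<beta> p) 1) -
       (y * (1 - LI (hB \<alpha> \<beta>) (Wf p q y) / Beta \<alpha> \<beta>)\<^sup>2 +
      2 * (q / Beta \<alpha> \<beta> * LI (hB (\<alpha> + 1 / p) (\<beta> - 1 / p)) (Wf p q y) - q / (Beta \<alpha> \<beta>)\<^sup>2 * LI (hK \<alpha> \<beta> p) (Wf p q y)))"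
    using *(2)[OF prem A Bl] unfolding \<Phi>_def .
qed

end

theorem proposition1:
  fixes \<alpha> \<beta> p q y :: real
  assumes "\<alpha> > 0" and "\<beta> > 0" and "p > 0" and "q > 0"
    and "\<beta> * p > 1" and "\<alpha> + \<beta> \<noteq> 1" and "y > 0"
  defines "w \<equiv> y powr p / (q powr p + y powr p)"
  shows "CRPS (gbp_cdf \<alpha> \<beta> p q) y =
      2 * gbp_mean \<alpha> \<beta> p q - y
      + 2 / Beta \<alpha> \<beta> *
          (y * inc_Beta w \<alpha> \<beta>
           + y / (\<alpha> + \<beta> - 1) * w powr (\<alpha> - 1) * (1 - w) powr \<beta>
             * (1 - hyp2F1 1 (\<alpha> + \<beta> - 1) (\<alpha> + 1 / p) w))
      - 2 * q / (\<alpha> * (Beta \<alpha> \<beta>)\<^sup>2) * Beta (2 * \<alpha> + 1 / p) (2 * \<beta> - 1 / p)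
          * hyp3F2 (\<alpha> + \<beta>) 1 (2 * \<alpha> + 1 / p) (\<alpha> + 1) (2 * \<alpha> + 2 * \<beta>) 1"
proof -
  note al = assms(1) and be = assms(2) and p = assms(3) and q = assms(4) and bp = assms(5)
    and ab1 = assms(6) and y = assms(7)
  define B where "B = Beta \<alpha> \<beta>"
  have B: "B > 0" unfolding B_def by (rule B_pos[OF al be p q bp])
  define LA where "LA x = LI (hB \<alpha> \<beta>) (Wf p q x)" for x
  define f1 where "f1 x = (LA x / B)\<^sup>2" for x
  define f2 where "f2 x = (1 - LA x / B)\<^sup>2" for x
  define K1 where "K1 = LI (hK \<alpha> \<beta> p) 1"
  define Kw where "Kw = LI (hK \<alpha> \<beta> p) (Wf p q y)"
  define M1 where "M1 = LI (hB (\<alpha> + 1 / p) (\<beta> - 1 / p)) 1"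
  define Mw where "Mw = LI (hB (\<alpha> + 1 / p) (\<beta> - 1 / p)) (Wf p q y)"
  have wW: "w = Wf p q y" unfolding w_def Wf_def ..
  have w01: "0 < w" "w < 1" using Wf_range[OF p q y] by (auto simp: wW)
  have a': "\<alpha> + 1 / p > 0" by (rule a'_pos[OF al be p q bp])
  have b': "\<beta> - 1 / p > 0" by (rule b'_pos[OF al be p bp])
  have pw: "(gbp_cdf \<alpha> \<beta> p q x - heaviside (x - y))\<^sup>2 =
      indicator {0<..<y} x * f1 x + indicator {y..} x * f2 x" for x
  proof -
    have c: "gbp_cdf \<alpha> \<beta> p q x = Fx \<alpha> \<beta> p q x" by (rule cdf_eq[OF al be p q])
    show ?thesis
      unfolding c Fx_def heaviside_def f1_def f2_def LA_def B_def using y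
      by (cases "x \<le> 0"; cases "x < y") (auto simp: indicator_def power2_commute)
  qed
  have i1: "set_integrable lborel {0<..<y} f1"
    unfolding f1_def LA_def B_def by (rule piece1(1)[OF al be p q bp y])
  have v1: "(LBINT x:{0<..<y}. f1 x) = y * (LA y / B)\<^sup>2 - 2 * (q / B\<^sup>2 * Kw) - 0"
    unfolding f1_def LA_def B_def Kw_def by (rule piece1(2)[OF al be p q bp y])
  have i2': "set_integrable lborel {y<..} f2"
    unfolding f2_def LA_def B_def by (rule piece2(1)[OF al be p q bp y])
  have v2': "(LBINT x:{y<..}. f2 x) = 2 * (q / B * M1 - q / B\<^sup>2 * K1) -
       (y * (1 - LA y / B)\<^sup>2 + 2 * (q / B * Mw - q / B\<^sup>2 * Kw))"
    unfolding f2_def LA_def B_def Kw_def K1_def M1_def Mw_def by (rule piece2(2)[OF al be p q bp y])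
  have i2: "set_integrable lborel {y..} f2"
    using i2' by (subst set_integrable_discrete_difference[where X="{y}"]) auto
  have v2: "(LBINT x:{y..}. f2 x) = (LBINT x:{y<..}. f2 x)"
    by (rule set_integral_discrete_difference[where X="{y}"]) auto
  have crps: "CRPS (gbp_cdf \<alpha> \<beta> p q) y = (LBINT x:{0<..<y}. f1 x) + (LBINT x:{y..}. f2 x)"
  proof -
    have "CRPS (gbp_cdf \<alpha> \<beta> p q) y = (LINT x|lborel. indicator {0<..<y} x * f1 x + indicator {y..} x * f2 x)"
      unfolding CRPS_def pw ..
    also have "\<dots> = (LINT x|lborel. indicator {0<..<y} x * f1 x) + (LINT x|lborel. indicator {y..} x * f2 x)"
      by (rule Bochner_Integration.integral_add) (use i1 i2 in \<open>auto simp: set_integrable_def\<close>)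
    finally show ?thesis by (simp add: set_lebesgue_integral_def)
  qed
  have LAy: "LA y = inc_Beta w \<alpha> \<beta>"
    unfolding LA_def wW[symmetric] by (rule LI_hB_inc_Beta[OF al be]) (use w01 in auto)
  have M1v: "M1 = Beta (\<alpha> + 1 / p) (\<beta> - 1 / p)" unfolding M1_def by (rule LI_hB_1[OF a' b'])
  have mean: "gbp_mean \<alpha> \<beta> p q = q / B * M1" unfolding gbp_mean_def M1v B_def by simp
  have h3: "hyp3F2 (\<alpha> + \<beta>) 1 (2 * \<alpha> + 1 / p) (\<alpha> + 1) (2 * \<alpha> + 2 * \<beta>) 1 =
     \<alpha> / Beta (2 * \<alpha> + 1 / p) (2 * \<beta> - 1 / p) * K1"
    unfolding K1_def by (rule hyp3F2_eq[OF al be p bp])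
  have BCD: "Beta (2 * \<alpha> + 1 / p) (2 * \<beta> - 1 / p) > 0"
    by (rule Beta_pos_real[OF C_pos[OF al be p bp] D_pos[OF al be p bp]])
  have T3: "2 * q / (\<alpha> * (Beta \<alpha> \<beta>)\<^sup>2) * Beta (2 * \<alpha> + 1 / p) (2 * \<beta> - 1 / p)
          * hyp3F2 (\<alpha> + \<beta>) 1 (2 * \<alpha> + 1 / p) (\<alpha> + 1) (2 * \<alpha> + 2 * \<beta>) 1 = 2 * q / B\<^sup>2 * K1"
    unfolding h3 B_def using BCD al by (simp add: field_simps)
  define S where "S = Ss (\<alpha> + 1 / p) (\<beta> - 1 / p) w"
  have h2: "hyp2F1 1 (\<alpha> + \<beta> - 1) (\<alpha> + 1 / p) w = 1 + (\<alpha> + \<beta> - 1) * w * S"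
    unfolding S_def by (rule hyp2F1_eq[OF al be p bp w01])
  have Mwv: "Mw = w powr (\<alpha> + 1 / p) * (1 - w) powr (\<beta> - 1 / p) * S"
  proof -
    have "Mw = inc_Beta w (\<alpha> + 1 / p) (\<beta> - 1 / p)"
      unfolding Mw_def wW[symmetric] by (rule LI_hB_inc_Beta[OF a' b']) (use w01 in auto)
    also have "\<dots> = Gs (\<alpha> + 1 / p) (\<beta> - 1 / p) w"
      by (rule inc_Beta_Gs[OF a' b']) (use w01 in auto)
    finally show ?thesis by (simp add: Gs_def S_def)
  qed
  have ws: "y * (w powr \<alpha> * (1 - w) powr \<beta>) = q * (w powr (\<alpha> + 1 / p) * (1 - w) powr (\<beta> - 1 / p))"
    unfolding wW by (rule w_shift[OF p q y])
  have wa: "w powr (\<alpha> - 1) * w = w powr \<alpha>"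
    using w01 by (simp add: powr_diff)
  have T2: "y / (\<alpha> + \<beta> - 1) * w powr (\<alpha> - 1) * (1 - w) powr \<beta>
             * (1 - hyp2F1 1 (\<alpha> + \<beta> - 1) (\<alpha> + 1 / p) w) = - q * Mw"
  proof -
    have nz: "\<alpha> + \<beta> - 1 \<noteq> 0" using ab1 by simp
    have "y / (\<alpha> + \<beta> - 1) * w powr (\<alpha> - 1) * (1 - w) powr \<beta>
             * (1 - hyp2F1 1 (\<alpha> + \<beta> - 1) (\<alpha> + 1 / p) w)
          = - (y * ((w powr (\<alpha> - 1) * w) * (1 - w) powr \<beta>)) * S"
      unfolding h2 using nz by (simp add: field_simps)
    also have "\<dots> = - q * Mw" unfolding wa ws Mwv by simp
    finally show ?thesis .
  qed
  show ?thesis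
    unfolding crps v1 v2 v2' T2 T3 mean
    unfolding LAy[symmetric] B_def[symmetric]
    using B by (simp add: field_simps power2_eq_square)
qed

end
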